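(* Let $n\ge3$, $0<\ell\le m$, and let $J$ be a real symmetric diagonally balanced $n\times n$ matrix with $\ell\le J_{ij}\le m$ for all $i\ne j$. For $1\le i\le n$ let $J_{(i)}$ be the lower-right $(n-i+1)\times(n-i+1)$ principal submatrix of $J$ (rows and columns $i,\dots,n$), with eigenvalues $\lambda_1\le\dots\le\lambda_{n-i+1}$. Then $$(n-2)\ell\le\lambda_j\le(n-2)m\ \ (1\le j\le n-i),\qquad (2n-i-1)\ell\le\lambda_{n-i+1}\le(2n-i-1)m.$$ If $J$ is only assumed diagonally dominant (with $\ell\le J_{ij}\le m$ for $i\ne j$), the lower bounds still hold.
   Context: For a real $n\times n$ matrix $J$, $\Delta_i(J)=|J_{ii}|-\sum_{j\ne i}|J_{ij}|$; $J$ is diagonally dominant if $\Delta_i(J)\ge0$ for all $i$ and diagonally balanced if $\Delta_i(J)=0$ for all $i$. *)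

theory Defs
  imports "Jordan_Normal_Form.Char_Poly"
begin

definition row_excess :: "real mat \<Rightarrow> nat \<Rightarrow> real" where
  "row_excess J i = \<bar>J $$ (i,i)\<bar> - (\<Sum>j\<in>{0..<dim_col J} - {i}. \<bar>J $$ (i,j)\<bar>)"

definition diag_dominant :: "real mat \<Rightarrow> bool" where
  "diag_dominant J \<longleftrightarrow> (\<forall>i<dim_row J. row_excess J i \<ge> 0)"

definition diag_balanced :: "real mat \<Rightarrow> bool" where
  "diag_balanced J \<longleftrightarrow> (\<forall>i<dim_row J. row_excess J i = 0)"

(* J_(i): lower-right principal submatrix on rows/columns i..n (1-based i) *)
definition lower_right :: "real mat \<Rightarrow> nat \<Rightarrow> real mat" where
  "lower_right J i = mat (dim_row J - i + 1) (dim_row J - i + 1)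
     (\<lambda>(a,b). J $$ (a + i - 1, b + i - 1))"

(* es is the list of eigenvalues of A (with algebraic multiplicity), in increasing order *)
definition sorted_eigenvalues :: "real mat \<Rightarrow> real list \<Rightarrow> bool" where
  "sorted_eigenvalues A es \<longleftrightarrow> sorted es \<and> char_poly A = (\<Prod>a\<leftarrow>es. [:- a, 1:])"

end

theory Submission imports Defs "Jordan_Normal_Form.Schur_Decomposition" begin

lemma real_sq_ge0: "(v::real vec) \<bullet> v \<ge> 0"
  using conjugate_square_ge_0_vec[of v] by simp

lemma orthonormal_completion:
  fixes u :: "real vec"
  assumes u: "u \<in> carrier_vec k" and u1: "u \<bullet> u = 1"
  shows "\<exists>W \<in> carrier_mat k k. transpose_mat W * W = 1\<^sub>m k \<and> col W 0 = u"
proof -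
  have u0: "u \<noteq> 0\<^sub>v k" using u1 u by auto
  hence k0: "k \<noteq> 0" using u by auto
  interpret cof_vec_space k "TYPE(real)" .
  define b where "b = basis_completion u"
  from basis_completion[OF u u0, folded b_def]
  have dist_b: "distinct b" 
    and indep: "\<not> lin_dep (set b)" and b: "set b \<subseteq> carrier_vec k" and hdb: "hd b = u" 
    and len_b: "length b = k" by auto
  from hdb len_b k0 obtain vs where bv: "b = u # vs" by (cases b, auto)
  define ws where "ws = gram_schmidt k b"
  from gram_schmidt_result[OF b dist_b indep refl, folded ws_def]
  have ws: "set ws \<subseteq> carrier_vec k" "corthogonal ws" "length ws = k" 
    by (auto simp: len_b)
  from gram_schmidt_hd[OF u, of vs, folded bv] have hdws: "hd ws = u" unfolding ws_def .
  define ws' where "ws' = map (\<lambda>w. (1 / sqrt (w \<bullet> w)) \<cdot>\<^sub>v w) ws"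
  have len': "length ws' = k" using ws by (simp add: ws'_def)
  have orth: "i < k \<Longrightarrow> j < k \<Longrightarrow> (ws ! i \<bullet> ws ! j = 0) = (i \<noteq> j)" for i j
    using corthogonalD[OF ws(2), of i j] ws(3) by simp
  have carr: "i < k \<Longrightarrow> ws ! i \<in> carrier_vec k" for i using ws by auto
  have pos: "i < k \<Longrightarrow> ws ! i \<bullet> ws ! i > 0" for i
    using orth[of i i] real_sq_ge0[of "ws ! i"] by (metis less_eq_real_def)
  have ws'i: "i < k \<Longrightarrow> ws' ! i = (1 / sqrt (ws ! i \<bullet> ws ! i)) \<cdot>\<^sub>v ws ! i" for i
    using ws by (simp add: ws'_def)
  have sp: "i < k \<Longrightarrow> j < k \<Longrightarrow> ws' ! i \<bullet> ws' ! j = (if i = j then 1 else 0)" for i j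
  proof -
    assume i: "i < k" and j: "j < k"
    have "ws' ! i \<bullet> ws' ! j = (1 / sqrt (ws ! i \<bullet> ws ! i)) * (1 / sqrt (ws ! j \<bullet> ws ! j)) * (ws ! i \<bullet> ws ! j)"
      using ws'i[OF i] ws'i[OF j] carr[OF i] carr[OF j]
      by (simp add: scalar_prod_smult_distrib smult_scalar_prod_distrib)
    thus ?thesis using orth[OF i j] pos[OF i]
      by (cases "i = j") (auto simp: real_sqrt_mult[symmetric] simp del: real_sqrt_mult)
  qed
  define W where "W = mat_of_cols k ws'"
  have W: "W \<in> carrier_mat k k" using len' by (simp add: W_def mat_of_cols_def)
  have colW: "j < k \<Longrightarrow> col W j = ws' ! j" for j
    unfolding W_def using len' ws'i carr by (intro col_mat_of_cols) auto
  have "transpose_mat W * W = 1\<^sub>m k"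
  proof (rule eq_matI)
    fix i j assume "i < dim_row (1\<^sub>m k)" "j < dim_col (1\<^sub>m k)"
    hence i: "i < k" and j: "j < k" by auto
    have "(transpose_mat W * W) $$ (i,j) = col W i \<bullet> col W j" using W i j by simp
    thus "(transpose_mat W * W) $$ (i,j) = 1\<^sub>m k $$ (i,j)" using sp[OF i j] colW i j by simp
  qed (use W in auto)
  moreover have "col W 0 = u"
  proof -
    have "ws ! 0 = u" using hdws k0 ws(3) by (cases ws) auto
    thus ?thesis using colW[of 0] k0 ws'i[of 0] u1 by simp
  qed
  ultimately show ?thesis using W by blast
qed

definition diag_list :: "nat \<Rightarrow> real list \<Rightarrow> real mat" where
  "diag_list k es = mat k k (\<lambda>(i,j). if i = j then es ! i else 0)"

lemma spectral:
  fixes A :: "real mat"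
  assumes "A \<in> carrier_mat k k" and "transpose_mat A = A"
    and "char_poly A = (\<Prod>e\<leftarrow>es. [:- e, 1:])"
  shows "\<exists>Q \<in> carrier_mat k k. transpose_mat Q * Q = 1\<^sub>m k \<and>
            transpose_mat Q * A * Q = diag_list k es"
  using assms
proof (induct es arbitrary: k A)
  case Nil
  from degree_monic_char_poly[OF Nil(1)] Nil(3) have k: "k = 0" by simp
  show ?case
    by (rule bexI[of _ "1\<^sub>m 0"], insert Nil(1) k, auto intro!: eq_matI simp: diag_list_def)
next
  case (Cons e es k A)
  note A = Cons(2) and symA = Cons(3) and cpA = Cons(4)
  have mon: "monic (\<Prod>e\<leftarrow> es. [:- e, 1:])" by (rule monic_prod_list, auto)
  have "degree (char_poly A) = Suc (degree (\<Prod>e\<leftarrow> es. [:- e, 1:]))" unfolding cpA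
  proof -
    have "(\<Prod>e\<leftarrow> es. [:- e, 1:]) \<noteq> 0" using mon by auto
    thus "degree (\<Prod>e\<leftarrow>e # es. [:- e, 1:]) = Suc (degree (\<Prod>e\<leftarrow> es. [:- e, 1:]))"
      by (simp only: list.map prod_list.Cons, subst degree_mult_eq) (auto simp del: mult_pCons_left)
  qed
  with degree_monic_char_poly[OF A] have k0: "k \<noteq> 0" by auto
  have ev: "eigenvalue A e" unfolding eigenvalue_root_char_poly[OF A] cpA by simp
  define v where "v = find_eigenvector A e"
  from find_eigenvector[OF A ev, folded v_def] A
  have v: "v \<in> carrier_vec k" and v0: "v \<noteq> 0\<^sub>v k" and Av: "A *\<^sub>v v = e \<cdot>\<^sub>v v"
    unfolding eigenvector_def by auto
  have vpos: "v \<bullet> v > 0" using conjugate_square_greater_0_vec[OF v] v0 by simp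
  define u where "u = (1 / sqrt (v \<bullet> v)) \<cdot>\<^sub>v v"
  have u: "u \<in> carrier_vec k" using v by (simp add: u_def)
  have u1: "u \<bullet> u = 1" using vpos v
    by (simp add: u_def scalar_prod_smult_distrib smult_scalar_prod_distrib)
  have Au: "A *\<^sub>v u = e \<cdot>\<^sub>v u" unfolding u_def using A v Av
    by (simp add: mult_mat_vec smult_smult_assoc mult.commute)
  from orthonormal_completion[OF u u1] obtain W where W: "W \<in> carrier_mat k k"
    and WTW: "transpose_mat W * W = 1\<^sub>m k" and colW0: "col W 0 = u" by blast
  have WT: "transpose_mat W \<in> carrier_mat k k" using W by simp
  have WWT: "W * transpose_mat W = 1\<^sub>m k"
    by (rule mat_mult_left_right_inverse[OF WT W WTW])
  define A' where "A' = transpose_mat W * A * W"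
  have A': "A' \<in> carrier_mat k k" using W A by (simp add: A'_def)
  have symA': "transpose_mat A' = A'" unfolding A'_def
  proof -
    have "transpose_mat (transpose_mat W * A * W) = transpose_mat W * transpose_mat (transpose_mat W * A)"
      using W A by (subst transpose_mult[of _ k k _ k]) auto
    also have "transpose_mat (transpose_mat W * A) = transpose_mat A * W"
      using W A by (subst transpose_mult[of _ k k _ k]) auto
    finally show "transpose_mat (transpose_mat W * A * W) = transpose_mat W * A * W"
      using symA W A by (simp add: assoc_mult_mat[of _ k k _ k _ k])
  qed
  have col0: "A' $$ (i, 0) = (if i = 0 then e else 0)" if i: "i < k" for i
  proof -
    have "A' = transpose_mat W * (A * W)" unfolding A'_def using W A by (simp add: assoc_mult_mat[of _ k k _ k _ k])
    hence "A' $$ (i,0) = row (transpose_mat W) i \<bullet> col (A * W) 0" using W A i k0 by simp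
    also have "col (A * W) 0 = A *\<^sub>v u" using A W k0 colW0 by (simp add: mult_mat_vec_def)
    also have "\<dots> = e \<cdot>\<^sub>v col W 0" using Au colW0 by simp
    also have "row (transpose_mat W) i \<bullet> (e \<cdot>\<^sub>v col W 0) = e * (row (transpose_mat W) i \<bullet> col W 0)"
      using W i by (simp add: scalar_prod_smult_distrib[of _ k])
    also have "row (transpose_mat W) i \<bullet> col W 0 = (transpose_mat W * W) $$ (i,0)" using W i k0 by simp
    also have "\<dots> = (if i = 0 then 1 else 0)" using WTW i k0 by simp
    finally show ?thesis by simp
  qed
  have row0: "A' $$ (0, j) = (if j = 0 then e else 0)" if j: "j < k" for j
  proof -
    have "A' $$ (0,j) = transpose_mat A' $$ (j,0)" using A' j k0 by simp
    thus ?thesis using symA' col0[OF j] by simp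
  qed
  define A3 where "A3 = mat (k-1) (k-1) (\<lambda>(i,j). A' $$ (Suc i, Suc j))"
  define A1 where "A1 = mat 1 1 (\<lambda>_. e)"
  have A3: "A3 \<in> carrier_mat (k-1) (k-1)" by (simp add: A3_def)
  have A1: "A1 \<in> carrier_mat 1 1" by (simp add: A1_def)
  have blk: "A' = four_block_mat A1 (0\<^sub>m 1 (k-1)) (0\<^sub>m (k-1) 1) A3"
  proof (rule eq_matI)
    fix i j assume "i < dim_row (four_block_mat A1 (0\<^sub>m 1 (k-1)) (0\<^sub>m (k-1) 1) A3)"
      "j < dim_col (four_block_mat A1 (0\<^sub>m 1 (k-1)) (0\<^sub>m (k-1) 1) A3)"
    hence i: "i < k" and j: "j < k" using k0 by (auto simp: A1_def A3_def)
    show "A' $$ (i, j) = four_block_mat A1 (0\<^sub>m 1 (k-1)) (0\<^sub>m (k-1) 1) A3 $$ (i, j)"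
      using i j col0[OF i] row0[OF j] k0 by (auto simp: A1_def A3_def)
  qed (use A' k0 A1_def A3_def in auto)
  have symA3: "transpose_mat A3 = A3"
  proof (rule eq_matI)
    fix i j assume "i < dim_row A3" "j < dim_col A3"
    hence i: "Suc i < k" and j: "Suc j < k" by (auto simp: A3_def)
    have "A' $$ (Suc j, Suc i) = transpose_mat A' $$ (Suc i, Suc j)" using A' i j by simp
    thus "transpose_mat A3 $$ (i, j) = A3 $$ (i, j)" using symA' i j by (simp add: A3_def)
  qed (auto simp: A3_def)
  have eqA: "W * A' * transpose_mat W = A"
  proof -
    have "W * A' * transpose_mat W = (W * transpose_mat W) * A * (W * transpose_mat W)"
      unfolding A'_def using W WT A by (simp add: assoc_mult_mat[of _ k k _ k _ k])
    thus ?thesis using WWT A by simp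
  qed
  have sim: "similar_mat A A'"
    unfolding similar_mat_def similar_mat_wit_def Let_def
    by (rule exI[of _ W], rule exI[of _ "transpose_mat W"], insert A A' W WT WTW WWT eqA, auto)
  have "char_poly A = char_poly A'" by (rule char_poly_similar[OF sim])
  also have "\<dots> = char_poly A1 * char_poly A3" unfolding blk
    by (rule char_poly_four_block_zeros_col[OF A1 _ A3], simp)
  also have "char_poly A1 = [: -e,1 :]"
    by (simp add: A1_def char_poly_defs det_def sign_def)
  finally have "[: -e,1 :] * char_poly A3 = [: -e,1 :] * (\<Prod> e \<leftarrow> es. [:- e, 1:])"
    using cpA by simp
  hence "char_poly A3 = (\<Prod> e \<leftarrow> es. [:- e, 1:])"
    by (subst (asm) mult_left_cancel) auto
  from Cons(1)[OF A3 symA3 this] obtain Q3 where Q3: "Q3 \<in> carrier_mat (k-1) (k-1)"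
    and Q3TQ3: "transpose_mat Q3 * Q3 = 1\<^sub>m (k-1)"
    and Q3A3: "transpose_mat Q3 * A3 * Q3 = diag_list (k-1) es" by blast
  define B where "B = four_block_mat (1\<^sub>m 1) (0\<^sub>m 1 (k-1)) (0\<^sub>m (k-1) 1) Q3"
  have B: "B \<in> carrier_mat k k"
    using four_block_carrier_mat[of "1\<^sub>m 1" 1 1 Q3 "k-1" "k-1" "0\<^sub>m 1 (k-1)" "0\<^sub>m (k-1) 1"] Q3 k0
    by (simp add: B_def)
  have BT: "transpose_mat B = four_block_mat (1\<^sub>m 1) (0\<^sub>m 1 (k-1)) (0\<^sub>m (k-1) 1) (transpose_mat Q3)"
    unfolding B_def by (subst transpose_four_block_mat, insert Q3, auto)
  have c1: "1\<^sub>m 1 \<in> carrier_mat 1 1" "0\<^sub>m 1 (k-1) \<in> carrier_mat 1 (k-1)"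
    "0\<^sub>m (k-1) 1 \<in> carrier_mat (k-1) 1" "transpose_mat Q3 \<in> carrier_mat (k-1) (k-1)"
    using Q3 by auto
  have one: "four_block_mat (1\<^sub>m 1) (0\<^sub>m 1 (k-1)) (0\<^sub>m (k-1) 1) (1\<^sub>m (k-1)) = (1\<^sub>m k :: real mat)"
    using four_block_one_mat[of 1 "k-1"] k0 by simp
  have BTB: "transpose_mat B * B = 1\<^sub>m k" unfolding BT unfolding B_def
    by (subst mult_four_block_mat[OF c1 c1(1-3) Q3], insert Q3 Q3TQ3 one, simp)
  have BAB: "transpose_mat B * A' * B = diag_list k (e # es)"
  proof -
    have "transpose_mat B * A' * B = four_block_mat A1 (0\<^sub>m 1 (k-1)) (0\<^sub>m (k-1) 1) (transpose_mat Q3 * A3 * Q3)"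
      unfolding BT blk unfolding B_def
      by (subst mult_four_block_mat[OF c1 A1 c1(2,3) A3], subst mult_four_block_mat[of _ 1 1 _ "k-1" _ "k-1" _ _ 1 _ "k-1"],
        insert Q3 A1 A3, auto simp: A1_def)
    also have "\<dots> = diag_list k (e # es)" unfolding Q3A3
      by (rule eq_matI, insert k0, auto simp: diag_list_def A1_def)
    finally show ?thesis .
  qed
  define Q where "Q = W * B"
  have Q: "Q \<in> carrier_mat k k" using W B by (simp add: Q_def)
  have QT: "transpose_mat Q = transpose_mat B * transpose_mat W" unfolding Q_def
    using W B by (simp add: transpose_mult)
  have "transpose_mat Q * Q = transpose_mat B * (transpose_mat W * W) * B"
    unfolding QT unfolding Q_def using W B WT by (simp add: assoc_mult_mat[of _ k k _ k _ k])
  hence 1: "transpose_mat Q * Q = 1\<^sub>m k" using WTW BTB B by simp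
  have "transpose_mat Q * A * Q = transpose_mat B * A' * B"
    unfolding QT unfolding Q_def A'_def using W B WT A by (simp add: assoc_mult_mat[of _ k k _ k _ k])
  hence 2: "transpose_mat Q * A * Q = diag_list k (e # es)" using BAB by simp
  show ?case using Q 1 2 by blast
qed

lemma sum_two_support:
  fixes g :: "nat \<Rightarrow> real"
  assumes "a < k" "b < k" "a \<noteq> b" "\<And>j. j < k \<Longrightarrow> j \<noteq> a \<Longrightarrow> j \<noteq> b \<Longrightarrow> g j = 0"
  shows "(\<Sum>j\<in>{0..<k}. g j) = g a + g b"
proof -
  have "(\<Sum>j\<in>{0..<k}. g j) = (\<Sum>j\<in>{a,b}. g j)"
    by (rule sum.mono_neutral_right, insert assms, auto)
  thus ?thesis using assms(3) by simp
qed

lemma diag_list_mult: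
  assumes y: "y \<in> carrier_vec k"
  shows "diag_list k es *\<^sub>v y = vec k (\<lambda>j. es ! j * y $ j)"
proof (rule eq_vecI)
  fix j assume "j < dim_vec (vec k (\<lambda>j. es ! j * y $ j))"
  hence j: "j < k" by simp
  have "(diag_list k es *\<^sub>v y) $ j = (\<Sum>i\<in>{0..<k}. (if j = i then es ! j else 0) * y $ i)"
    using j y by (simp add: diag_list_def scalar_prod_def row_def)
  also have "\<dots> = (\<Sum>i\<in>{j}. (if j = i then es ! j else 0) * y $ i)"
    by (rule sum.mono_neutral_right, insert j, auto)
  finally show "(diag_list k es *\<^sub>v y) $ j = vec k (\<lambda>j. es ! j * y $ j) $ j" using j by simp
qed (simp add: diag_list_def)

lemma spec_quad:
  fixes A Q :: "real mat"
  assumes A: "A \<in> carrier_mat k k" and Q: "Q \<in> carrier_mat k k"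
    and QTQ: "transpose_mat Q * Q = 1\<^sub>m k" and QAQ: "transpose_mat Q * A * Q = diag_list k es"
    and y: "y \<in> carrier_vec k"
  shows "(Q *\<^sub>v y) \<bullet> (A *\<^sub>v (Q *\<^sub>v y)) = (\<Sum>j\<in>{0..<k}. es ! j * (y $ j)^2)"
    and "(Q *\<^sub>v y) \<bullet> (Q *\<^sub>v y) = y \<bullet> y"
proof -
  have QT: "transpose_mat Q \<in> carrier_mat k k" using Q by simp
  have sw: "(Q *\<^sub>v y) \<bullet> w = y \<bullet> (transpose_mat Q *\<^sub>v w)" if w: "w \<in> carrier_vec k" for w
    using transpose_vec_mult_scalar[OF QT w y] Q by simp
  have "(Q *\<^sub>v y) \<bullet> (A *\<^sub>v (Q *\<^sub>v y)) = y \<bullet> (transpose_mat Q *\<^sub>v (A *\<^sub>v (Q *\<^sub>v y)))"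
    using sw A Q y by simp
  also have "transpose_mat Q *\<^sub>v (A *\<^sub>v (Q *\<^sub>v y)) = (transpose_mat Q * A * Q) *\<^sub>v y"
    using A Q QT y by (simp add: assoc_mult_mat_vec[of _ k k _ k] )
  also have "\<dots> = vec k (\<lambda>j. es ! j * y $ j)" unfolding QAQ by (rule diag_list_mult[OF y])
  also have "y \<bullet> \<dots> = (\<Sum>j\<in>{0..<k}. es ! j * (y $ j)^2)"
    using y by (simp add: scalar_prod_def power2_eq_square ac_simps)
  finally show "(Q *\<^sub>v y) \<bullet> (A *\<^sub>v (Q *\<^sub>v y)) = (\<Sum>j\<in>{0..<k}. es ! j * (y $ j)^2)" .
  have "(Q *\<^sub>v y) \<bullet> (Q *\<^sub>v y) = y \<bullet> (transpose_mat Q *\<^sub>v (Q *\<^sub>v y))" using sw Q y by simp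
  also have "transpose_mat Q *\<^sub>v (Q *\<^sub>v y) = y" using QTQ Q QT y
    by (simp add: assoc_mult_mat_vec[of _ k k _ k, symmetric])
  finally show "(Q *\<^sub>v y) \<bullet> (Q *\<^sub>v y) = y \<bullet> y" .
qed

lemma spec_facts:
  fixes A :: "real mat"
  assumes A: "A \<in> carrier_mat k k" and symA: "transpose_mat A = A"
    and cp: "char_poly A = (\<Prod>e\<leftarrow>es. [:- e, 1:])" and srt: "sorted es"
  shows "length es = k"
    and "\<And>j. j < k \<Longrightarrow> \<exists>x\<in>carrier_vec k. x \<bullet> x = 1 \<and> x \<bullet> (A *\<^sub>v x) = es ! j"
    and "\<And>x. x \<in> carrier_vec k \<Longrightarrow> x \<bullet> (A *\<^sub>v x) \<le> es ! (k-1) * (x \<bullet> x)"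
    and "\<And>z. k \<ge> 2 \<Longrightarrow> z \<in> carrier_vec k \<Longrightarrow>
           \<exists>x\<in>carrier_vec k. x \<bullet> x > 0 \<and> z \<bullet> x = 0 \<and> es ! (k-2) * (x \<bullet> x) \<le> x \<bullet> (A *\<^sub>v x)"
proof -
  have "degree (\<Prod>e\<leftarrow>es. [:- e, 1:]) = length es"
    by (subst degree_prod_list_eq, auto simp: o_def sum_list_triv)
  thus len: "length es = k" using degree_monic_char_poly[OF A] cp by simp
  from spectral[OF A symA cp] obtain Q where Q: "Q \<in> carrier_mat k k"
    and QTQ: "transpose_mat Q * Q = 1\<^sub>m k" and QAQ: "transpose_mat Q * A * Q = diag_list k es" by blast
  have QT: "transpose_mat Q \<in> carrier_mat k k" using Q by simp
  have QQT: "Q * transpose_mat Q = 1\<^sub>m k" by (rule mat_mult_left_right_inverse[OF QT Q QTQ])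
  note sq = spec_quad[OF A Q QTQ QAQ]
  show "\<exists>x\<in>carrier_vec k. x \<bullet> x = 1 \<and> x \<bullet> (A *\<^sub>v x) = es ! j" if j: "j < k" for j
  proof (intro bexI conjI)
    let ?y = "unit_vec k j"
    have y: "?y \<in> carrier_vec k" by simp
    show "Q *\<^sub>v ?y \<in> carrier_vec k" using Q by simp
    show "(Q *\<^sub>v ?y) \<bullet> (Q *\<^sub>v ?y) = 1" unfolding sq(2)[OF y] using j by simp
    have "(\<Sum>i\<in>{0..<k}. es ! i * (?y $ i)^2) = (\<Sum>i\<in>{j}. es ! i * (?y $ i)^2)"
      by (rule sum.mono_neutral_right, insert j, auto)
    thus "(Q *\<^sub>v ?y) \<bullet> (A *\<^sub>v (Q *\<^sub>v ?y)) = es ! j" unfolding sq(1)[OF y] using j by simp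
  qed
  show "x \<bullet> (A *\<^sub>v x) \<le> es ! (k-1) * (x \<bullet> x)" if x: "x \<in> carrier_vec k" for x
  proof -
    define y where "y = transpose_mat Q *\<^sub>v x"
    have y: "y \<in> carrier_vec k" using QT x by (simp add: y_def)
    have xy: "x = Q *\<^sub>v y" unfolding y_def using QQT Q QT x
      by (simp add: assoc_mult_mat_vec[of _ k k _ k, symmetric])
    have "(\<Sum>j\<in>{0..<k}. es ! j * (y $ j)^2) \<le> (\<Sum>j\<in>{0..<k}. es ! (k-1) * (y $ j)^2)"
    proof (rule sum_mono)
      fix j assume "j \<in> {0..<k}"
      hence "es ! j \<le> es ! (k-1)" using srt len by (intro sorted_nth_mono) auto
      thus "es ! j * (y $ j)^2 \<le> es ! (k-1) * (y $ j)^2" by (simp add: mult_right_mono)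
    qed
    also have "\<dots> = es ! (k-1) * (y \<bullet> y)" using y
      by (simp add: scalar_prod_def sum_distrib_left power2_eq_square)
    finally show ?thesis unfolding xy sq(1)[OF y] sq(2)[OF y] .
  qed
  show "\<exists>x\<in>carrier_vec k. x \<bullet> x > 0 \<and> z \<bullet> x = 0 \<and> es ! (k-2) * (x \<bullet> x) \<le> x \<bullet> (A *\<^sub>v x)"
    if k2: "k \<ge> 2" and z: "z \<in> carrier_vec k" for z
  proof -
    define c where "c = transpose_mat Q *\<^sub>v z"
    have c: "c \<in> carrier_vec k" using QT z by (simp add: c_def)
    obtain \<alpha> \<beta> :: real where ab: "\<alpha> * c $ (k-2) + \<beta> * c $ (k-1) = 0" and nz: "\<alpha>^2 + \<beta>^2 > 0"
    proof (cases "c $ (k-1) = 0 \<and> c $ (k-2) = 0")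
      case True thus ?thesis using that[of 1 0] by simp
    next
      case False
      thus ?thesis using that[of "c $ (k-1)" "- c $ (k-2)"]
        by (auto simp: algebra_simps sum_power2_gt_zero_iff)
    qed
    define y where "y = vec k (\<lambda>j. if j = k-2 then \<alpha> else if j = k-1 then \<beta> else 0)"
    have y: "y \<in> carrier_vec k" by (simp add: y_def)
    have ab2: "k - 2 < k" "k - 1 < k" "k - 2 \<noteq> k - 1" using k2 by auto
    have dy: "dim_vec y = k" by (simp add: y_def)
    have yy: "y \<bullet> y = \<alpha>^2 + \<beta>^2" unfolding scalar_prod_def dy
      by (subst sum_two_support[OF ab2], insert ab2, auto simp: y_def power2_eq_square)
    have zx: "z \<bullet> (Q *\<^sub>v y) = 0"
    proof -
      have "z \<bullet> (Q *\<^sub>v y) = c \<bullet> y" unfolding c_def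
        using transpose_vec_mult_scalar[OF Q y z] by simp
      also have "\<dots> = \<alpha> * c $ (k-2) + \<beta> * c $ (k-1)" unfolding scalar_prod_def dy
        by (subst sum_two_support[OF ab2], insert ab2, auto simp: y_def)
      finally show ?thesis using ab by simp
    qed
    have "(\<Sum>j\<in>{0..<k}. es ! j * (y $ j)^2) = es ! (k-2) * \<alpha>^2 + es ! (k-1) * \<beta>^2"
      by (subst sum_two_support[OF ab2], insert ab2, auto simp: y_def)
    also have "\<dots> \<ge> es ! (k-2) * (\<alpha>^2 + \<beta>^2)"
    proof -
      have "es ! (k-2) \<le> es ! (k-1)" using srt len k2 by (intro sorted_nth_mono) auto
      hence "es ! (k-2) * \<beta>^2 \<le> es ! (k-1) * \<beta>^2" by (simp add: mult_right_mono)
      thus ?thesis by (simp add: algebra_simps)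
    qed
    finally have "es ! (k-2) * (y \<bullet> y) \<le> (Q *\<^sub>v y) \<bullet> (A *\<^sub>v (Q *\<^sub>v y))"
      unfolding sq(1)[OF y] yy .
    thus ?thesis using zx nz yy Q y unfolding sq(2)[OF y, symmetric]
      by (intro bexI[of _ "Q *\<^sub>v y"]) auto
  qed
qed

lemma sum_minus_if:
  fixes g :: "nat \<Rightarrow> real"
  shows "(\<Sum>b\<in>{0..<k}-{a}. g b) = (\<Sum>b\<in>{0..<k}. if a = b then 0 else g b)"
proof -
  have "(\<Sum>b\<in>{0..<k}. if a = b then 0 else g b) = (\<Sum>b\<in>{0..<k}-{a}. if a = b then 0 else g b)"
    by (rule sum.mono_neutral_right) auto
  also have "\<dots> = (\<Sum>b\<in>{0..<k}-{a}. g b)" by (rule sum.cong) auto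
  finally show ?thesis by simp
qed

lemma psd_dd:
  fixes N :: "nat \<Rightarrow> nat \<Rightarrow> real" and x :: "nat \<Rightarrow> real"
  assumes sym: "\<And>a b. a < k \<Longrightarrow> b < k \<Longrightarrow> N a b = N b a"
    and off: "\<And>a b. a < k \<Longrightarrow> b < k \<Longrightarrow> a \<noteq> b \<Longrightarrow> N a b \<ge> 0"
    and dom: "\<And>a. a < k \<Longrightarrow> (\<Sum>b\<in>{0..<k}-{a}. N a b) \<le> N a a"
  shows "0 \<le> (\<Sum>a\<in>{0..<k}. \<Sum>b\<in>{0..<k}. N a b * x a * x b)"
proof -
  let ?K = "{0..<k}"
  define S1 where "S1 = (\<Sum>a\<in>?K. \<Sum>b\<in>?K-{a}. N a b * (x a)^2)"
  define S2 where "S2 = (\<Sum>a\<in>?K. \<Sum>b\<in>?K-{a}. N a b * (x b)^2)"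
  define S3 where "S3 = (\<Sum>a\<in>?K. \<Sum>b\<in>?K-{a}. N a b * x a * x b)"
  have split: "(\<Sum>b\<in>?K. f b) = f a + (\<Sum>b\<in>?K-{a}. f b)" if "a < k" for a and f :: "nat \<Rightarrow> real"
    using that by (subst sum.remove[of _ a]) auto
  have tot: "(\<Sum>a\<in>?K. \<Sum>b\<in>?K. N a b * x a * x b) = (\<Sum>a\<in>?K. N a a * (x a)^2) + S3"
    unfolding S3_def sum.distrib[symmetric]
    by (rule sum.cong, simp, subst split, auto simp: power2_eq_square)
  have S12: "S2 = S1"
  proof -
    have "S2 = (\<Sum>a\<in>?K. \<Sum>b\<in>?K. if a = b then 0 else N a b * (x b)^2)"
      unfolding S2_def by (simp add: sum_minus_if)
    also have "\<dots> = (\<Sum>b\<in>?K. \<Sum>a\<in>?K. if a = b then 0 else N a b * (x b)^2)"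
      by (rule sum.swap)
    also have "\<dots> = (\<Sum>b\<in>?K. \<Sum>a\<in>?K. if b = a then 0 else N b a * (x b)^2)"
      by (rule sum.cong, simp, rule sum.cong, auto simp: sym)
    also have "\<dots> = S1"
      unfolding S1_def by (simp add: sum_minus_if)
    finally show ?thesis .
  qed
  define T where "T = (\<Sum>a\<in>?K. \<Sum>b\<in>?K-{a}. N a b * (x a + x b)^2)"
  have pt: "N a b * (x a + x b)^2 = N a b * (x a)^2 + N a b * (x b)^2 + 2 * (N a b * x a * x b)" for a b
    by (simp add: power2_eq_square algebra_simps)
  have T: "T = S1 + S2 + 2 * S3"
    unfolding T_def S1_def S2_def S3_def pt sum.distrib sum_distrib_left[symmetric] ..
  have T0: "T \<ge> 0" unfolding T_def
    by (intro sum_nonneg mult_nonneg_nonneg off, auto)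
  have R0: "(\<Sum>a\<in>?K. (N a a - (\<Sum>b\<in>?K-{a}. N a b)) * (x a)^2) \<ge> 0"
    by (intro sum_nonneg mult_nonneg_nonneg, insert dom, auto)
  have S1': "S1 = (\<Sum>a\<in>?K. (\<Sum>b\<in>?K-{a}. N a b) * (x a)^2)"
    unfolding S1_def by (simp add: sum_distrib_right)
  have R: "(\<Sum>a\<in>?K. (N a a - (\<Sum>b\<in>?K-{a}. N a b)) * (x a)^2)
     = (\<Sum>a\<in>?K. N a a * (x a)^2) - (\<Sum>a\<in>?K. (\<Sum>b\<in>?K-{a}. N a b) * (x a)^2)"
    unfolding left_diff_distrib sum_subtractf ..
  have "(\<Sum>a\<in>?K. \<Sum>b\<in>?K. N a b * x a * x b) = (\<Sum>a\<in>?K. (N a a - (\<Sum>b\<in>?K-{a}. N a b)) * (x a)^2) + T / 2"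
    unfolding tot R T S12 S1'[symmetric] by (simp add: field_simps)
  thus ?thesis using T0 R0 by simp
qed

lemma qf_sum:
  fixes A :: "real mat"
  assumes A: "A \<in> carrier_mat k k" and x: "x \<in> carrier_vec k"
  shows "x \<bullet> (A *\<^sub>v x) = (\<Sum>a\<in>{0..<k}. \<Sum>b\<in>{0..<k}. A $$ (a,b) * x $ a * x $ b)"
  using A x by (simp add: scalar_prod_def row_def sum_distrib_left ac_simps)

lemma sq_sum: "(\<Sum>a\<in>{0..<k}. (y::nat \<Rightarrow> real) a)^2 = (\<Sum>a\<in>{0..<k}. \<Sum>b\<in>{0..<k}. y a * y b)"
  by (simp add: power2_eq_square sum_product)

lemma delta_sum: "(\<Sum>b\<in>{0..<k}. (if a = b then c else 0) * (y::nat \<Rightarrow> real) a * y b) = (if a < k then c * (y a)^2 else 0)"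
proof -
  have "(\<Sum>b\<in>{0..<k}. (if a = b then c else 0) * y a * y b) = (\<Sum>b\<in>{0..<k}. if a = b then c * y a * y b else 0)"
    by (rule sum.cong) auto
  also have "\<dots> = (if a < k then c * (y a)^2 else 0)" by (simp add: power2_eq_square)
  finally show ?thesis .
qed

lemma quad_lower:
  fixes A :: "real mat"
  assumes A: "A \<in> carrier_mat k k" and x: "x \<in> carrier_vec k"
    and sym: "\<And>a b. a < k \<Longrightarrow> b < k \<Longrightarrow> A $$ (a,b) = A $$ (b,a)"
    and off: "\<And>a b. a < k \<Longrightarrow> b < k \<Longrightarrow> a \<noteq> b \<Longrightarrow> l \<le> A $$ (a,b)"
    and dom: "\<And>a. a < k \<Longrightarrow> (\<Sum>b\<in>{0..<k}-{a}. A $$ (a,b) - l) \<le> A $$ (a,a) - (c + l)"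
  shows "c * (x \<bullet> x) + l * (\<Sum>a\<in>{0..<k}. x $ a)^2 \<le> x \<bullet> (A *\<^sub>v x)"
proof -
  define N where "N a b = A $$ (a,b) - l - (if a = b then c else 0)" for a b
  have "0 \<le> (\<Sum>a\<in>{0..<k}. \<Sum>b\<in>{0..<k}. N a b * x $ a * x $ b)"
  proof (rule psd_dd)
    fix a assume a: "a < k"
    have "(\<Sum>b\<in>{0..<k}-{a}. N a b) = (\<Sum>b\<in>{0..<k}-{a}. A $$ (a,b) - l)"
      by (rule sum.cong) (auto simp: N_def)
    thus "(\<Sum>b\<in>{0..<k}-{a}. N a b) \<le> N a a" using dom[OF a] by (simp add: N_def)
  qed (auto simp: N_def sym off)
  also have "(\<Sum>a\<in>{0..<k}. \<Sum>b\<in>{0..<k}. N a b * x $ a * x $ b)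
    = x \<bullet> (A *\<^sub>v x) - l * (\<Sum>a\<in>{0..<k}. x $ a)^2 - c * (x \<bullet> x)"
  proof -
    have "(\<Sum>a\<in>{0..<k}. \<Sum>b\<in>{0..<k}. N a b * x $ a * x $ b)
      = (\<Sum>a\<in>{0..<k}. (\<Sum>b\<in>{0..<k}. A $$ (a,b) * x $ a * x $ b) - l * (\<Sum>b\<in>{0..<k}. x $ a * x $ b)
          - (\<Sum>b\<in>{0..<k}. (if a = b then c else 0) * x $ a * x $ b))"
      unfolding N_def by (simp add: algebra_simps sum_subtractf sum_distrib_left)
    also have "\<dots> = (\<Sum>a\<in>{0..<k}. (\<Sum>b\<in>{0..<k}. A $$ (a,b) * x $ a * x $ b) - l * (\<Sum>b\<in>{0..<k}. x $ a * x $ b)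
          - c * (x $ a)^2)"
      by (rule sum.cong, simp, subst delta_sum[where y="\<lambda>i. x $ i"], simp)
    also have "\<dots> = x \<bullet> (A *\<^sub>v x) - l * (\<Sum>a\<in>{0..<k}. x $ a)^2 - c * (x \<bullet> x)"
      unfolding qf_sum[OF A x] sq_sum[where y="\<lambda>i. x $ i"] using x
      by (simp add: sum_subtractf sum_distrib_left scalar_prod_def power2_eq_square)
    finally show ?thesis .
  qed
  finally show ?thesis by simp
qed

lemma quad_upper:
  fixes A :: "real mat"
  assumes A: "A \<in> carrier_mat k k" and x: "x \<in> carrier_vec k"
    and sym: "\<And>a b. a < k \<Longrightarrow> b < k \<Longrightarrow> A $$ (a,b) = A $$ (b,a)"
    and off: "\<And>a b. a < k \<Longrightarrow> b < k \<Longrightarrow> a \<noteq> b \<Longrightarrow> A $$ (a,b) \<le> m"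
    and dom: "\<And>a. a < k \<Longrightarrow> (\<Sum>b\<in>{0..<k}-{a}. m - A $$ (a,b)) \<le> (c + m) - A $$ (a,a)"
  shows "x \<bullet> (A *\<^sub>v x) \<le> c * (x \<bullet> x) + m * (\<Sum>a\<in>{0..<k}. x $ a)^2"
proof -
  define N where "N a b = m + (if a = b then c else 0) - A $$ (a,b)" for a b
  have "0 \<le> (\<Sum>a\<in>{0..<k}. \<Sum>b\<in>{0..<k}. N a b * x $ a * x $ b)"
  proof (rule psd_dd)
    fix a assume a: "a < k"
    have "(\<Sum>b\<in>{0..<k}-{a}. N a b) = (\<Sum>b\<in>{0..<k}-{a}. m - A $$ (a,b))"
      by (rule sum.cong) (auto simp: N_def)
    thus "(\<Sum>b\<in>{0..<k}-{a}. N a b) \<le> N a a" using dom[OF a] by (simp add: N_def)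
  qed (auto simp: N_def sym off)
  also have "(\<Sum>a\<in>{0..<k}. \<Sum>b\<in>{0..<k}. N a b * x $ a * x $ b)
    = m * (\<Sum>a\<in>{0..<k}. x $ a)^2 + c * (x \<bullet> x) - x \<bullet> (A *\<^sub>v x)"
  proof -
    have "(\<Sum>a\<in>{0..<k}. \<Sum>b\<in>{0..<k}. N a b * x $ a * x $ b)
      = (\<Sum>a\<in>{0..<k}. m * (\<Sum>b\<in>{0..<k}. x $ a * x $ b) + (\<Sum>b\<in>{0..<k}. (if a = b then c else 0) * x $ a * x $ b)
          - (\<Sum>b\<in>{0..<k}. A $$ (a,b) * x $ a * x $ b))"
      unfolding N_def by (simp add: algebra_simps sum_subtractf sum.distrib sum_distrib_left)
    also have "\<dots> = (\<Sum>a\<in>{0..<k}. m * (\<Sum>b\<in>{0..<k}. x $ a * x $ b) + c * (x $ a)^2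
          - (\<Sum>b\<in>{0..<k}. A $$ (a,b) * x $ a * x $ b))"
      by (rule sum.cong, simp, subst delta_sum[where y="\<lambda>i. x $ i"], simp)
    also have "\<dots> = m * (\<Sum>a\<in>{0..<k}. x $ a)^2 + c * (x \<bullet> x) - x \<bullet> (A *\<^sub>v x)"
      unfolding qf_sum[OF A x] sq_sum[where y="\<lambda>i. x $ i"] using x
      by (simp add: sum_subtractf sum.distrib sum_distrib_left scalar_prod_def power2_eq_square)
    finally show ?thesis .
  qed
  finally show ?thesis by simp
qed

lemma cs_sum: "(\<Sum>a\<in>{0..<k}. (y::nat \<Rightarrow> real) a)^2 \<le> real k * (\<Sum>a\<in>{0..<k}. (y a)^2)"
proof -
  have "0 \<le> (\<Sum>a\<in>{0..<k}. \<Sum>b\<in>{0..<k}. (y a - y b)^2)" by (intro sum_nonneg) auto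
  also have "\<dots> = (\<Sum>a\<in>{0..<k}. \<Sum>b\<in>{0..<k}. (y a)^2 + (y b)^2 - 2 * (y a * y b))"
    by (simp add: power2_diff mult.assoc)
  also have "\<dots> = 2 * (real k * (\<Sum>a\<in>{0..<k}. (y a)^2)) - 2 * (\<Sum>a\<in>{0..<k}. y a)^2"
  proof -
    have "(\<Sum>a\<in>{0..<k}. \<Sum>b\<in>{0..<k}. (y a)^2 + (y b)^2 - 2 * (y a * y b))
       = (\<Sum>a\<in>{0..<k}. \<Sum>b\<in>{0..<k}. (y a)^2) + (\<Sum>a\<in>{0..<k}. \<Sum>b\<in>{0..<k}. (y b)^2)
         - 2 * (\<Sum>a\<in>{0..<k}. \<Sum>b\<in>{0..<k}. y a * y b)"
      by (simp only: sum_subtractf sum.distrib sum_distrib_left)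
    thus ?thesis unfolding sq_sum by (simp add: sum_distrib_left)
  qed
  finally show ?thesis by simp
qed

lemma sum_shift_le:
  fixes f :: "nat \<Rightarrow> real"
  assumes "k + s = n" "a < k" "\<And>q. q < n \<Longrightarrow> q \<noteq> a + s \<Longrightarrow> f q \<ge> 0"
  shows "(\<Sum>b\<in>{0..<k}-{a}. f (b + s)) \<le> (\<Sum>q\<in>{0..<n}-{a+s}. f q)"
proof -
  have "(\<Sum>b\<in>{0..<k}-{a}. f (b + s)) = (\<Sum>q\<in>(\<lambda>b. b + s) ` ({0..<k}-{a}). f q)"
    by (subst sum.reindex, auto simp: inj_on_def)
  also have "\<dots> \<le> (\<Sum>q\<in>{0..<n}-{a+s}. f q)"
    by (rule sum_mono2, insert assms, auto)
  finally show ?thesis .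
qed
theorem lemma7p2:
  fixes J :: "real mat" and n :: nat and l m :: real
  assumes "J \<in> carrier_mat n n"
    and "n \<ge> 3"
    and "0 < l" and "l \<le> m"
    and "transpose_mat J = J"
    and "\<forall>i<n. \<forall>j<n. i \<noteq> j \<longrightarrow> l \<le> J $$ (i,j) \<and> J $$ (i,j) \<le> m"
    and "\<forall>i<n. J $$ (i,i) \<ge> 0"
  shows "(diag_balanced J \<longrightarrow>
           (\<forall>i\<in>{1..n}. \<forall>es. sorted_eigenvalues (lower_right J i) es \<longrightarrow>
              (\<forall>j\<in>{1..n-i}. (real n - 2) * l \<le> es ! (j-1) \<and> es ! (j-1) \<le> (real n - 2) * m) \<and>
              (2 * real n - real i - 1) * l \<le> es ! (n-i) \<and> es ! (n-i) \<le> (2 * real n - real i - 1) * m))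
       \<and> (diag_dominant J \<longrightarrow>
           (\<forall>i\<in>{1..n}. \<forall>es. sorted_eigenvalues (lower_right J i) es \<longrightarrow>
              (\<forall>j\<in>{1..n-i}. (real n - 2) * l \<le> es ! (j-1)) \<and>
              (2 * real n - real i - 1) * l \<le> es ! (n-i)))"
proof -
  note J = assms(1) and n3 = assms(2) and l0 = assms(3) and lm = assms(4)
    and symJ = assms(5) and offJ = assms(6) and diag0 = assms(7)
  have dJ: "dim_row J = n" "dim_col J = n" using J by auto
  have Jsym: "J $$ (p,q) = J $$ (q,p)" if "p < n" "q < n" for p q
  proof -
    have "J $$ (p,q) = transpose_mat J $$ (q,p)" using that J by simp
    thus ?thesis using symJ by simp
  qed
  have rowsum: "(\<Sum>q\<in>{0..<n}-{p}. \<bar>J $$ (p,q)\<bar>) = (\<Sum>q\<in>{0..<n}-{p}. J $$ (p,q))" if p: "p < n" for p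
    by (rule sum.cong, simp, insert offJ p l0, fastforce)
  have card1: "card ({0..<n}-{p}) = n - 1" if "p < n" for p using that by simp
  have rn1: "real (n - 1) = real n - 1" using n3 by simp
  have domrow: "(\<Sum>q\<in>{0..<n}-{p}. J $$ (p,q)) \<le> J $$ (p,p)" if dd: "diag_dominant J" and p: "p < n" for p
    using dd p diag0 rowsum[OF p] unfolding diag_dominant_def row_excess_def dJ by fastforce
  have balrow: "(\<Sum>q\<in>{0..<n}-{p}. J $$ (p,q)) = J $$ (p,p)" if dd: "diag_balanced J" and p: "p < n" for p
    using dd p diag0 rowsum[OF p] unfolding diag_balanced_def row_excess_def dJ by fastforce
  have main: "(\<forall>j\<in>{1..n-i}. (real n - 2) * l \<le> es ! (j-1)) \<and> (2 * real n - real i - 1) * l \<le> es ! (n-i)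
     \<and> (diag_balanced J \<longrightarrow> (\<forall>j\<in>{1..n-i}. es ! (j-1) \<le> (real n - 2) * m) \<and> es ! (n-i) \<le> (2 * real n - real i - 1) * m)"
    if dd: "diag_dominant J" and i: "i \<in> {1..n}" and se: "sorted_eigenvalues (lower_right J i) es" for i es
  proof -
    define k where "k = n - i + 1"
    define s where "s = i - 1"
    define A where "A = lower_right J i"
    have ks: "k + s = n" and k1: "k \<ge> 1" and ki: "k - 1 = n - i" using i by (auto simp: k_def s_def)
    have rk: "real k = real n - real i + 1" using i by (simp add: k_def)
    have A: "A \<in> carrier_mat k k" by (simp add: A_def lower_right_def dJ k_def)
    have Aidx: "A $$ (a,b) = J $$ (a+s, b+s)" if "a < k" "b < k" for a b
      using that i by (simp add: A_def lower_right_def dJ k_def s_def)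
    have Asym: "A $$ (a,b) = A $$ (b,a)" if "a < k" "b < k" for a b
      using that Aidx Jsym ks by simp
    have symA: "transpose_mat A = A"
      by (rule eq_matI, insert A Asym, auto)
    have Aoff: "l \<le> A $$ (a,b) \<and> A $$ (a,b) \<le> m" if "a < k" "b < k" "a \<noteq> b" for a b
      using that Aidx offJ ks by simp
    from se have srt: "sorted es" and cp: "char_poly A = (\<Prod>e\<leftarrow>es. [:- e, 1:])"
      unfolding sorted_eigenvalues_def A_def by auto
    note sf = spec_facts[OF A symA cp srt]
    define ones where "ones = vec k (\<lambda>_. 1::real)"
    have ones: "ones \<in> carrier_vec k" by (simp add: ones_def)
    have onesx: "ones \<bullet> x = (\<Sum>a\<in>{0..<k}. x $ a)" if "x \<in> carrier_vec k" for x
      using that by (simp add: ones_def scalar_prod_def)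
    have onesum: "(\<Sum>a\<in>{0..<k}. ones $ a) = real k" by (simp add: ones_def)
    have onesones: "ones \<bullet> ones = real k" by (simp add: ones_def scalar_prod_def)
    have domL: "(\<Sum>b\<in>{0..<k}-{a}. A $$ (a,b) - l) \<le> A $$ (a,a) - ((real n - 2) * l + l)" if a: "a < k" for a
    proof -
      have p: "a + s < n" using a ks by simp
      have "(\<Sum>b\<in>{0..<k}-{a}. A $$ (a,b) - l) = (\<Sum>b\<in>{0..<k}-{a}. J $$ (a+s, b+s) - l)"
        by (rule sum.cong, insert a Aidx, auto)
      also have "\<dots> \<le> (\<Sum>q\<in>{0..<n}-{a+s}. J $$ (a+s, q) - l)"
        by (rule sum_shift_le[OF ks a], insert offJ p, auto)
      also have "\<dots> = (\<Sum>q\<in>{0..<n}-{a+s}. J $$ (a+s, q)) - (real n - 1) * l"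
        using card1[OF p] rn1 by (simp add: sum_subtractf)
      also have "\<dots> \<le> J $$ (a+s, a+s) - (real n - 1) * l" using domrow[OF dd p] by simp
      finally show ?thesis using Aidx[OF a a] by (simp add: algebra_simps)
    qed
    have qL: "(real n - 2) * l * (x \<bullet> x) + l * (\<Sum>a\<in>{0..<k}. x $ a)^2 \<le> x \<bullet> (A *\<^sub>v x)"
      if x: "x \<in> carrier_vec k" for x
      by (rule quad_lower[OF A x Asym _ domL], insert Aoff, auto)
    have low: "(real n - 2) * l \<le> es ! j" if j: "j < k" for j
    proof -
      from sf(2)[OF j] obtain x where x: "x \<in> carrier_vec k" and xx: "x \<bullet> x = 1"
        and xa: "x \<bullet> (A *\<^sub>v x) = es ! j" by blast
      from qL[OF x] xx xa have "(real n - 2) * l + l * (\<Sum>a\<in>{0..<k}. x $ a)^2 \<le> es ! j" by simp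
      moreover have "l * (\<Sum>a\<in>{0..<k}. x $ a)^2 \<ge> 0" using l0 by simp
      ultimately show ?thesis by linarith
    qed
    have top_low: "(2 * real n - real i - 1) * l \<le> es ! (k-1)"
    proof -
      from qL[OF ones] onesum onesones
      have "(real n - 2) * l * real k + l * (real k)^2 \<le> ones \<bullet> (A *\<^sub>v ones)" by simp
      also have "\<dots> \<le> es ! (k-1) * real k" using sf(3)[OF ones] onesones by simp
      finally have "((real n - 2) * l + l * real k) * real k \<le> es ! (k-1) * real k"
        by (simp add: power2_eq_square algebra_simps)
      hence "(real n - 2) * l + l * real k \<le> es ! (k-1)" using k1 by simp
      thus ?thesis using rk by (simp add: algebra_simps)
    qed
    have up: "(\<forall>j\<in>{1..n-i}. es ! (j-1) \<le> (real n - 2) * m) \<and> es ! (n-i) \<le> (2 * real n - real i - 1) * m"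
      if bal: "diag_balanced J"
    proof -
      have domU: "(\<Sum>b\<in>{0..<k}-{a}. m - A $$ (a,b)) \<le> ((real n - 2) * m + m) - A $$ (a,a)" if a: "a < k" for a
      proof -
        have p: "a + s < n" using a ks by simp
        have "(\<Sum>b\<in>{0..<k}-{a}. m - A $$ (a,b)) = (\<Sum>b\<in>{0..<k}-{a}. m - J $$ (a+s, b+s))"
          by (rule sum.cong, insert a Aidx, auto)
        also have "\<dots> \<le> (\<Sum>q\<in>{0..<n}-{a+s}. m - J $$ (a+s, q))"
          by (rule sum_shift_le[OF ks a], insert offJ p, auto)
        also have "\<dots> = (real n - 1) * m - (\<Sum>q\<in>{0..<n}-{a+s}. J $$ (a+s, q))"
          using card1[OF p] rn1 by (simp add: sum_subtractf)
        also have "\<dots> = (real n - 1) * m - J $$ (a+s, a+s)" using balrow[OF bal p] by simp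
        finally show ?thesis using Aidx[OF a a] by (simp add: algebra_simps)
      qed
      have qU: "x \<bullet> (A *\<^sub>v x) \<le> (real n - 2) * m * (x \<bullet> x) + m * (\<Sum>a\<in>{0..<k}. x $ a)^2"
        if x: "x \<in> carrier_vec k" for x
        by (rule quad_upper[OF A x Asym _ domU], insert Aoff, auto)
      have top_up: "es ! (k-1) \<le> (2 * real n - real i - 1) * m"
      proof -
        have k1': "k - 1 < k" using k1 by simp
        from sf(2)[OF k1'] obtain x where x: "x \<in> carrier_vec k" and xx: "x \<bullet> x = 1"
          and xa: "x \<bullet> (A *\<^sub>v x) = es ! (k-1)" by blast
        have cs: "(\<Sum>a\<in>{0..<k}. x $ a)^2 \<le> real k"
          using cs_sum[where y = "\<lambda>a. x $ a" and k = k] xx x by (simp add: scalar_prod_def power2_eq_square)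
        have m0: "m \<ge> 0" using l0 lm by simp
        from qU[OF x] xx xa have "es ! (k-1) \<le> (real n - 2) * m + m * (\<Sum>a\<in>{0..<k}. x $ a)^2" by simp
        also have "\<dots> \<le> (real n - 2) * m + m * real k" using cs m0 by (simp add: mult_left_mono)
        finally show ?thesis using rk by (simp add: algebra_simps)
      qed
      have mid: "es ! j \<le> (real n - 2) * m" if j: "j \<le> k - 2" and k2: "k \<ge> 2" for j
      proof -
        from sf(4)[OF k2 ones] obtain x where x: "x \<in> carrier_vec k" and xx: "x \<bullet> x > 0"
          and ox: "ones \<bullet> x = 0" and xa: "es ! (k-2) * (x \<bullet> x) \<le> x \<bullet> (A *\<^sub>v x)" by blast
        from ox onesx[OF x] have "(\<Sum>a\<in>{0..<k}. x $ a) = 0" by simp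
        with qU[OF x] xa have "es ! (k-2) * (x \<bullet> x) \<le> (real n - 2) * m * (x \<bullet> x)" by simp
        hence "es ! (k-2) \<le> (real n - 2) * m" using xx by simp
        moreover have "es ! j \<le> es ! (k-2)" using srt sf(1) j k2 by (intro sorted_nth_mono) auto
        ultimately show ?thesis by simp
      qed
      show ?thesis
      proof (intro conjI ballI)
        fix j assume "j \<in> {1..n-i}"
        hence "j - 1 \<le> k - 2" "k \<ge> 2" using ki by auto
        thus "es ! (j-1) \<le> (real n - 2) * m" by (rule mid)
      next
        show "es ! (n-i) \<le> (2 * real n - real i - 1) * m" using top_up ki by simp
      qed
    qed
    show ?thesis
    proof (intro conjI ballI impI)
      fix j assume "j \<in> {1..n-i}"
      hence "j - 1 < k" using ki by auto
      thus "(real n - 2) * l \<le> es ! (j-1)" by (rule low)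
    next
      show "(2 * real n - real i - 1) * l \<le> es ! (n-i)" using top_low ki by simp
    qed (use up in auto)
  qed
  have bal_dom: "diag_balanced J \<Longrightarrow> diag_dominant J"
    unfolding diag_balanced_def diag_dominant_def by simp
  show ?thesis
    apply (rule conjI)
    subgoal using main bal_dom by fastforce
    subgoal using main by fastforce
    done
qed

end
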